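(* In a PL+C model, if $\sum_{i\in\mathcal U}p_i\ge\alpha k$ for some $\alpha>1$, then $$\sum_{C\subseteq\mathcal U,\ |C|=k}\Pr_C(C)\le\frac{(\alpha e^{1-\alpha})^k}{1-(\alpha e^{1-\alpha})^k}.$$
   Context: Universe $\mathcal U=\{1,\dots,n\}$, integer $k\le n$, consideration probabilities $p_i\in(0,1]$. $\Pr_C(C)$ is the probability of consideration set $C$ when each item is included independently with probability $p_i$, conditioned on $|C|\ge k$: $\Pr_C(C)=\frac{1}{z_{k,p}}\prod_{h\in C}p_h\prod_{h\notin C}(1-p_h)$ for $|C|\ge k$, where $z_{k,p}=\sum_{|C|\ge k}\prod_{h\in C}p_h\prod_{h\notin C}(1-p_h)$, and $\Pr_C(C)=0$ if $|C|<k$. *)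

theory Defs
  imports Complex_Main
begin

text \<open>Universe U = {1..n}. Unnormalised weight of a consideration set C under
independent inclusion with probabilities p.\<close>
definition cs_weight :: "nat \<Rightarrow> (nat \<Rightarrow> real) \<Rightarrow> nat set \<Rightarrow> real" where
  "cs_weight n p C = (\<Prod>h\<in>C. p h) * (\<Prod>h\<in>{1..n} - C. 1 - p h)"

definition z_kp :: "nat \<Rightarrow> nat \<Rightarrow> (nat \<Rightarrow> real) \<Rightarrow> real" where
  "z_kp n k p = (\<Sum>C | C \<subseteq> {1..n} \<and> card C \<ge> k. cs_weight n p C)"

definition PrC :: "nat \<Rightarrow> nat \<Rightarrow> (nat \<Rightarrow> real) \<Rightarrow> nat set \<Rightarrow> real" where
  "PrC n k p C = (if C \<subseteq> {1..n} \<and> card C \<ge> k then cs_weight n p C / z_kp n k p else 0)"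

end

theory Submission
  imports Defs
begin

lemma beta_lt1:
  fixes \<alpha> :: real assumes "\<alpha> > 1"
  shows "0 < \<alpha> * exp (1 - \<alpha>)" "\<alpha> * exp (1 - \<alpha>) < 1"
proof -
  have "ln \<alpha> < \<alpha> - 1" using ln_add_one_self_less_self[of "\<alpha> - 1"] assms by simp
  hence "\<alpha> < exp (\<alpha> - 1)" using assms by (metis exp_less_cancel_iff exp_ln less_trans zero_less_one)
  hence "\<alpha> * exp (1 - \<alpha>) < exp (\<alpha> - 1) * exp (1 - \<alpha>)" by simp
  also have "\<dots> = 1" by (simp add: exp_add[symmetric])
  finally show "\<alpha> * exp (1 - \<alpha>) < 1" .
  show "0 < \<alpha> * exp (1 - \<alpha>)" using assms by simp
qed

theorem lemma4:
  fixes n k :: nat and p :: "nat \<Rightarrow> real" and \<alpha> :: real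
  assumes "1 \<le> k" and "k \<le> n"
    and "\<forall>i\<in>{1..n}. 0 < p i \<and> p i \<le> 1"
    and "\<alpha> > 1"
    and "(\<Sum>i=1..n. p i) \<ge> \<alpha> * real k"
  shows "(\<Sum>C | C \<subseteq> {1..n} \<and> card C = k. PrC n k p C)
           \<le> (\<alpha> * exp (1 - \<alpha>)) ^ k / (1 - (\<alpha> * exp (1 - \<alpha>)) ^ k)"
proof -
  define U where "U = {1..n}"
  define w where "w = cs_weight n p"
  define \<beta> where "\<beta> = (\<alpha> * exp (1 - \<alpha>)) ^ k"
  define x where "x = 1 / \<alpha>"
  have p: "\<And>i. i \<in> U \<Longrightarrow> 0 < p i \<and> p i \<le> 1" using assms(3) U_def by auto
  have finU: "finite U" by (simp add: U_def)
  have fin: "\<And>P. finite {C. C \<subseteq> U \<and> P C}" using finU by simp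
  have w0: "\<And>C. C \<subseteq> U \<Longrightarrow> 0 \<le> w C"
    unfolding w_def cs_weight_def U_def[symmetric]
    by (intro mult_nonneg_nonneg prod_nonneg) (use p in force)+
  have \<beta>0: "0 \<le> \<beta>" and \<beta>1: "\<beta> < 1"
    using beta_lt1[OF assms(4)] assms(1) unfolding \<beta>_def
    by (auto intro: power_less_one_iff[THEN iffD2])
  have x0: "0 < x" "x < 1" using assms(4) by (auto simp: x_def)
  have tot: "(\<Sum>C\<in>Pow U. w C) = 1"
  proof -
    have "(\<Prod>i\<in>U. p i + (1 - p i)) = (\<Sum>C\<in>Pow U. w C)"
      unfolding w_def cs_weight_def U_def[symmetric] by (rule prod_add[OF finU])
    thus ?thesis by simp
  qed
  have gen: "(\<Sum>C\<in>Pow U. w C * x ^ card C) = (\<Prod>i\<in>U. p i * x + (1 - p i))"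
  proof -
    have "(\<Prod>i\<in>U. p i * x + (1 - p i)) = (\<Sum>C\<in>Pow U. (\<Prod>i\<in>C. p i * x) * (\<Prod>i\<in>U - C. 1 - p i))"
      by (rule prod_add[OF finU])
    also have "\<dots> = (\<Sum>C\<in>Pow U. w C * x ^ card C)"
      unfolding w_def cs_weight_def U_def[symmetric]
      by (intro sum.cong refl) (simp add: prod.distrib)
    finally show ?thesis by simp
  qed
  have prodb: "(\<Prod>i\<in>U. p i * x + (1 - p i)) \<le> (\<Prod>i\<in>U. exp (- (p i * (1 - x))))"
  proof (rule prod_mono)
    fix i assume "i \<in> U"
    with p x0 have "0 \<le> p i * x + (1 - p i)" by (smt (verit) mult_nonneg_nonneg)
    moreover have "p i * x + (1 - p i) \<le> exp (- (p i * (1 - x)))"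
      using exp_ge_add_one_self[of "- (p i * (1 - x))"] by (simp add: algebra_simps)
    ultimately show "0 \<le> p i * x + (1 - p i) \<and> p i * x + (1 - p i) \<le> exp (- (p i * (1 - x)))" by simp
  qed
  have "(\<Prod>i\<in>U. exp (- (p i * (1 - x)))) = exp (- ((1 - x) * (\<Sum>i\<in>U. p i)))"
    by (simp add: exp_sum[OF finU, symmetric] sum_distrib_left sum_negf mult.commute)
  also have "\<dots> \<le> exp (- ((1 - x) * (\<alpha> * real k)))"
    using assms(5) x0 U_def by (simp add: mult_left_mono)
  also have "- ((1 - x) * (\<alpha> * real k)) = real k * (1 - \<alpha>)"
    using assms(4) by (simp add: x_def field_simps)
  finally have E: "(\<Prod>i\<in>U. exp (- (p i * (1 - x)))) \<le> exp (real k * (1 - \<alpha>))" .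
  have low: "(\<Sum>C | C \<subseteq> U \<and> card C \<le> k. w C) \<le> \<beta>"
  proof -
    have "(\<Sum>C | C \<subseteq> U \<and> card C \<le> k. w C) \<le> (\<Sum>C | C \<subseteq> U \<and> card C \<le> k. \<alpha> ^ k * (w C * x ^ card C))"
    proof (rule sum_mono)
      fix C assume C: "C \<in> {C. C \<subseteq> U \<and> card C \<le> k}"
      have "\<alpha> ^ k * x ^ card C = \<alpha> ^ (k - card C) * (\<alpha> ^ card C * x ^ card C)"
        using C by (simp add: power_add[symmetric])
      also have "\<dots> = \<alpha> ^ (k - card C)" using assms(4)
        by (simp add: x_def power_mult_distrib[symmetric])
      also have "\<dots> \<ge> 1" using assms(4) by simp
      finally have "1 \<le> \<alpha> ^ k * x ^ card C" .
      hence "w C * 1 \<le> w C * (\<alpha> ^ k * x ^ card C)" using w0 C by (intro mult_left_mono) auto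
      thus "w C \<le> \<alpha> ^ k * (w C * x ^ card C)" by (simp add: algebra_simps)
    qed
    also have "\<dots> \<le> (\<Sum>C\<in>Pow U. \<alpha> ^ k * (w C * x ^ card C))"
      using finU w0 x0 assms(4)
      by (intro sum_mono2) auto
    also have "\<dots> = \<alpha> ^ k * (\<Sum>C\<in>Pow U. w C * x ^ card C)" by (simp add: sum_distrib_left)
    also have "\<dots> \<le> \<alpha> ^ k * exp (real k * (1 - \<alpha>))"
      using gen prodb E assms(4) by (intro mult_left_mono) auto
    also have "\<dots> = \<beta>" unfolding \<beta>_def
      by (simp add: power_mult_distrib exp_of_nat_mult[symmetric])
    finally show ?thesis .
  qed
  define A where "A = (\<Sum>C | C \<subseteq> U \<and> card C = k. w C)"
  define B where "B = (\<Sum>C | C \<subseteq> U \<and> card C < k. w C)"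
  have A0: "0 \<le> A" unfolding A_def using w0 by (intro sum_nonneg) auto
  have B0: "0 \<le> B" unfolding B_def using w0 by (intro sum_nonneg) auto
  have AB: "A + B \<le> \<beta>"
  proof -
    have "{C. C \<subseteq> U \<and> card C \<le> k} = {C. C \<subseteq> U \<and> card C = k} \<union> {C. C \<subseteq> U \<and> card C < k}" by auto
    hence "(\<Sum>C | C \<subseteq> U \<and> card C \<le> k. w C) = A + B"
      unfolding A_def B_def by (simp add: sum.union_disjoint[OF fin fin] disjoint_iff)
    thus ?thesis using low by simp
  qed
  have Z: "z_kp n k p = 1 - B"
  proof -
    have "Pow U = {C. C \<subseteq> U \<and> k \<le> card C} \<union> {C. C \<subseteq> U \<and> card C < k}" by auto
    hence "(\<Sum>C\<in>Pow U. w C) = (\<Sum>C | C \<subseteq> U \<and> k \<le> card C. w C) + B"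
      unfolding B_def by (simp add: sum.union_disjoint[OF fin fin] disjoint_iff)
    also have "(\<Sum>C | C \<subseteq> U \<and> k \<le> card C. w C) = z_kp n k p"
      unfolding z_kp_def w_def U_def by simp
    finally have "(\<Sum>C\<in>Pow U. w C) = z_kp n k p + B" .
    thus ?thesis using tot by simp
  qed
  have L: "(\<Sum>C | C \<subseteq> {1..n} \<and> card C = k. PrC n k p C) = A / (1 - B)"
    unfolding A_def U_def w_def PrC_def Z[symmetric]
    by (simp add: sum_divide_distrib)
  have "A / (1 - B) \<le> (\<beta> - B) / (1 - B)"
    using AB A0 B0 \<beta>1 by (intro divide_right_mono) auto
  also have "\<dots> \<le> \<beta>"
  proof -
    have "\<beta> - B \<le> \<beta> * (1 - B)" using B0 \<beta>1 mult_left_mono[of \<beta> 1 B] by (simp add: algebra_simps)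
    moreover have "0 < 1 - B" using AB A0 \<beta>1 by linarith
    ultimately show ?thesis by (simp add: divide_le_eq)
  qed
  also have "\<dots> \<le> \<beta> / (1 - \<beta>)"
    using \<beta>0 \<beta>1 by (simp add: le_divide_eq mult_left_le)
  finally show ?thesis using L unfolding \<beta>_def by simp
qed

end
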